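(* Let $T=\omega^{<\omega}$ be the tree of all finite sequences of natural numbers ordered by end-extension $\sqsubseteq$. There is a colouring $c:T\to\omega$ such that for every strong subtree $T'$ of $T$ of infinite height, $c[T']=\omega$.
   Context: For a tree $T$, the level of $t$ is the number of its strict predecessors; the tree is balanced if it has infinite height and no maximal nodes, or all maximal nodes lie at the top level. A subtree is a subset with the induced order in which meets agree with those of $T$. A strong subtree $S$ of $T$ is either empty or a rooted balanced subtree such that every level of $S$ is contained in a single level of $T$ and, for every non-maximal $s\in S$ and every immediate successor $t$ of $s$ in $T$, exactly one immediate successor of $s$ in $S$ lies above (or equals) $t$. *)

theory Defs
  imports "HOL-Library.Sublist"
begin

text \<open>The tree T = omega^{<omega}: all finite sequences of naturals (type nat list),
ordered by end-extension, i.e. the prefix order (strict: strict_prefix).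
Subsets S of T carry the induced order.\<close>

definition lvl_in :: "nat list set \<Rightarrow> nat list \<Rightarrow> nat" where
  "lvl_in S s = card {u \<in> S. strict_prefix u s}"

definition maximal_in :: "nat list set \<Rightarrow> nat list \<Rightarrow> bool" where
  "maximal_in S s \<longleftrightarrow> s \<in> S \<and> \<not> (\<exists>u\<in>S. strict_prefix s u)"

definition infinite_height :: "nat list set \<Rightarrow> bool" where
  "infinite_height S \<longleftrightarrow> (\<forall>n. \<exists>s\<in>S. lvl_in S s \<ge> n)"

definition balanced :: "nat list set \<Rightarrow> bool" where
  "balanced S \<longleftrightarrow>
     (infinite_height S \<and> (\<forall>s\<in>S. \<not> maximal_in S s))
   \<or> (\<exists>h. (\<forall>s\<in>S. lvl_in S s \<le> h) \<and> (\<forall>s\<in>S. maximal_in S s \<longrightarrow> lvl_in S s = h))"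

text \<open>Subtree: the meet in T (longest common prefix) of any two elements of S lies in S,
so that meets in S exist and agree with those of T.\<close>
definition subtree :: "nat list set \<Rightarrow> bool" where
  "subtree S \<longleftrightarrow> (\<forall>s\<in>S. \<forall>t\<in>S. \<exists>u\<in>S. prefix u s \<and> prefix u t \<and>
                      (\<forall>v. prefix v s \<and> prefix v t \<longrightarrow> prefix v u))"

definition rooted :: "nat list set \<Rightarrow> bool" where
  "rooted S \<longleftrightarrow> (\<exists>r\<in>S. \<forall>s\<in>S. prefix r s)"

definition imm_succ_in :: "nat list set \<Rightarrow> nat list \<Rightarrow> nat list \<Rightarrow> bool" where
  "imm_succ_in S s t \<longleftrightarrow> s \<in> S \<and> t \<in> S \<and> strict_prefix s t \<and>
      \<not> (\<exists>u\<in>S. strict_prefix s u \<and> strict_prefix u t)"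

definition strong_subtree :: "nat list set \<Rightarrow> bool" where
  "strong_subtree S \<longleftrightarrow> S = {} \<or>
     (subtree S \<and> rooted S \<and> balanced S \<and>
      (\<forall>n. \<exists>m. \<forall>s\<in>S. lvl_in S s = n \<longrightarrow> length s = m) \<and>
      (\<forall>s\<in>S. \<not> maximal_in S s \<longrightarrow>
         (\<forall>k::nat. \<exists>!s'. imm_succ_in S s s' \<and> prefix (s @ [k]) s')))"

end

theory Submission
  imports Defs "HOL-Library.Nat_Bijection"
begin

definition col :: "nat list \<Rightarrow> nat" where
  "col t = snd (prod_decode (t ! (LEAST i. i < length t \<and> fst (prod_decode (t!i)) = length t)))"

lemma finite_sp: "finite {u\<in>S. strict_prefix u s}"
proof -
  have "{u\<in>S. strict_prefix u s} \<subseteq> set (prefixes s)" by auto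
  then show ?thesis by (rule finite_subset) simp
qed

lemma lvl_succ:
  assumes "imm_succ_in S s s'"
  shows "lvl_in S s' = Suc (lvl_in S s)"
proof -
  have A: "{u\<in>S. strict_prefix u s'} = insert s {u\<in>S. strict_prefix u s}"
  proof
    show "{u\<in>S. strict_prefix u s'} \<subseteq> insert s {u\<in>S. strict_prefix u s}"
    proof
      fix u assume u: "u \<in> {u\<in>S. strict_prefix u s'}"
      have "prefix u s \<or> prefix s u"
        using u assms prefix_same_cases[of u s' s]
        by (auto simp: imm_succ_in_def strict_prefix_def)
      then show "u \<in> insert s {u\<in>S. strict_prefix u s}"
        using u assms by (auto simp: imm_succ_in_def strict_prefix_def)
    qed
  next
    show "insert s {u\<in>S. strict_prefix u s} \<subseteq> {u\<in>S. strict_prefix u s'}"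
      using assms by (auto simp: imm_succ_in_def strict_prefix_def prefix_order.trans)
  qed
  have "s \<notin> {u\<in>S. strict_prefix u s}" by auto
  then show ?thesis unfolding lvl_in_def A using finite_sp[of S s] by simp
qed

lemma prod_encode_ge: "a \<le> prod_encode (a, b)"
  by (simp add: prod_encode_def)

theorem proposition6p4:
  shows "\<exists>c :: nat list \<Rightarrow> nat. \<forall>S. strong_subtree S \<and> infinite_height S \<longrightarrow> c ` S = UNIV"
proof (intro exI allI impI)
  fix S assume H: "strong_subtree S \<and> infinite_height S"
  then have ih: "infinite_height S" by blast
  then obtain s0 where "s0 \<in> S" unfolding infinite_height_def by blast
  then have ne: "S \<noteq> {}" by blast
  with H have st: "subtree S" "rooted S" "balanced S"
     and lv: "\<forall>n. \<exists>m. \<forall>s\<in>S. lvl_in S s = n \<longrightarrow> length s = m"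
     and sc: "\<forall>s\<in>S. \<not> maximal_in S s \<longrightarrow>
         (\<forall>k::nat. \<exists>!s'. imm_succ_in S s s' \<and> prefix (s @ [k]) s')"
    unfolding strong_subtree_def by blast+
  have nomax: "\<forall>s\<in>S. \<not> maximal_in S s"
  proof -
    { fix h assume h: "\<forall>s\<in>S. lvl_in S s \<le> h"
      from ih obtain s where "s \<in> S" "lvl_in S s \<ge> Suc h" unfolding infinite_height_def by blast
      with h have False by fastforce }
    then show ?thesis using st(3) unfolding balanced_def by blast
  qed
  have succ: "\<And>s k. s \<in> S \<Longrightarrow> \<exists>s'. imm_succ_in S s s' \<and> prefix (s @ [k]) s'"
    using sc nomax by blast
  have desc: "\<And>s. s \<in> S \<Longrightarrow> \<exists>t\<in>S. prefix s t \<and> lvl_in S t = lvl_in S s + d" for d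
  proof (induction d)
    case 0 then show ?case by auto
  next
    case (Suc d)
    then obtain t where t: "t \<in> S" "prefix s t" "lvl_in S t = lvl_in S s + d" by blast
    then obtain t' where t': "imm_succ_in S t t'" using succ by blast
    then have "t' \<in> S" "prefix t t'" "lvl_in S t' = Suc (lvl_in S t)"
      using lvl_succ by (auto simp: imm_succ_in_def)
    then show ?case using t by (intro bexI[of _ t']) auto
  qed
  obtain r where r: "r \<in> S" "\<forall>s\<in>S. prefix r s" using st(2) unfolding rooted_def by blast
  have lr: "lvl_in S r = 0"
  proof -
    have "{u\<in>S. strict_prefix u r} = {}" using r by (auto simp: strict_prefix_def)
    then show ?thesis unfolding lvl_in_def by (metis card.empty)
  qed
  define M where "M n = (SOME m. \<forall>s\<in>S. lvl_in S s = n \<longrightarrow> length s = m)" for n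
  have Mlen: "\<And>s. s \<in> S \<Longrightarrow> length s = M (lvl_in S s)"
  proof -
    fix s assume "s \<in> S"
    have "\<forall>x\<in>S. lvl_in S x = lvl_in S s \<longrightarrow> length x = M (lvl_in S s)"
    proof -
      have e: "\<exists>m. \<forall>x\<in>S. lvl_in S x = lvl_in S s \<longrightarrow> length x = m" using lv by blast
      show ?thesis using someI_ex[OF e] unfolding M_def .
    qed
    with \<open>s \<in> S\<close> show "length s = M (lvl_in S s)" by blast
  qed
  have Mmono: "M n < M (Suc n)" for n
  proof -
    obtain t where t: "t \<in> S" "lvl_in S t = n" using desc[OF r(1), of n] lr by auto
    obtain t' where t': "imm_succ_in S t t'" using succ t by blast
    then have "t' \<in> S" "strict_prefix t t'" "lvl_in S t' = Suc n"
      using lvl_succ t by (auto simp: imm_succ_in_def)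
    then show ?thesis using Mlen t prefix_length_less by metis
  qed
  have Mge: "n \<le> M n" for n
  proof (induction n)
    case (Suc n) then show ?case using Mmono[of n] by simp
  qed simp
  show "col ` S = UNIV"
  proof (rule set_eqI, rule iffI)
    fix j :: nat
    define N where "N = Suc (sum_list r)"
    define L where "L = M N"
    define v where "v = prod_encode (L, j)"
    obtain s' where s': "imm_succ_in S r s'" "prefix (r @ [v]) s'" using succ r(1) by blast
    then have s'S: "s' \<in> S" and ls': "lvl_in S s' = 1" using lvl_succ lr by (auto simp: imm_succ_in_def)
    obtain t where t: "t \<in> S" "prefix s' t" "lvl_in S t = 1 + (N - 1)"
      using desc[OF s'S, of "N - 1"] ls' by auto
    have tN: "lvl_in S t = N" using t(3) N_def by simp
    have lt: "length t = L" using Mlen[OF t(1)] tN L_def by simp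
    have pt: "prefix (r @ [v]) t" using s'(2) t(2) by (rule prefix_order.trans)
    then obtain w where tw: "t = r @ [v] @ w" by (auto simp: prefix_def)
    let ?P = "\<lambda>i. i < length t \<and> fst (prod_decode (t!i)) = length t"
    have "(LEAST i. ?P i) = length r"
    proof (rule Least_equality)
      show "?P (length r)" using tw lt v_def by simp
    next
      fix i assume Pi: "?P i"
      show "length r \<le> i"
      proof (rule ccontr)
        assume "\<not> length r \<le> i"
        then have ir: "i < length r" by simp
        then have ti: "t ! i = r ! i" using tw by (simp add: nth_append)
        have "r ! i \<in> set r" using ir by simp
        then have "r ! i \<le> sum_list r" by (simp add: member_le_sum_list)
        also have "\<dots> < N" using N_def by simp
        also have "N \<le> L" using Mge L_def by simp
        finally have "r ! i < L" .
        moreover have "L \<le> r ! i"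
          using Pi ti lt prod_encode_ge[of "fst (prod_decode (r!i))" "snd (prod_decode (r!i))"]
          by (metis prod.collapse prod_decode_inverse)
        ultimately show False by simp
      qed
    qed
    then have "col t = j" unfolding col_def using tw v_def by simp
    then show "j \<in> col ` S" using t(1) by blast
  qed simp
qed

end
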